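(* Let $A$ be a finite alphabet, $E\subseteq W(A)$ and $\vec s\in V^\infty(A)$ such that $E$ is large in $\vec s$. Then there exists a sequence $\vec w=(w_n(x))_{n=0}^\infty\in V^\infty(A)$ with $\vec w\le\vec s$ such that, setting $F_n=\langle (w_i(x))_{i=0}^n\rangle_c$, the set $E\cap E_{F_n}$ is large in $(w_{n+1+i}(x))_{i=0}^\infty$ for every $n\in\mathbb N$.
   Context: $\mathbb N=\{0,1,2,\dots\}$. Let $A$ be a finite nonempty alphabet. $W(A)$ denotes the set of all finite words over $A$, including the empty word; words are concatenated by juxtaposition. Fix a symbol $x\notin A$. A variable word over $A$ is a finite word over $A\cup\{x\}$ in which $x$ occurs at least once; $V(A)$ is the set of variable words. For $s(x)\in V(A)$ and $a\in A\cup\{x\}$, $s(a)$ is obtained by replacing every occurrence of $x$ by $a$. $V^\infty(A)$ is the set of infinite sequences of variable words. For a sequence $(s_n(x))_{n\in I}$ of variable words indexed by a set $I\subseteq\mathbb N$ that is either a finite interval or of the form $\{m,m+1,\dots\}$: the constant span $\langle (s_n(x))_{n\in I}\rangle_c$ is the set of all words $s_{l_0}(a_0)s_{l_1}(a_1)\cdots s_{l_j}(a_j)$ with $j\ge 0$, $l_0<\dots<l_j$ in $I$ and $a_0,\dots,a_j\in A$; the variable span $\langle (s_n(x))_{n\in I}\rangle_v$ is the set of all words $s_{l_0}(a_0)\cdots s_{l_j}(a_j)$ with $j\ge0$, $l_0<\dots<l_j$ in $I$, $a_0,\dots,a_j\in A\cup\{x\}$ and at least one $a_i=x$. Extracted subsequences: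 let $\vec s=(s_n(x))_{n=0}^\infty\in V^\infty(A)$. A finite sequence $(t_n(x))_{n=0}^l$ of variable words is an extracted subsequence of $\vec s$ if there exist integers $0=m_0<m_1<\dots<m_{l+1}$ with $t_i(x)\in\langle (s_n(x))_{n=m_i}^{m_{i+1}-1}\rangle_v$ for all $0\le i\le l$. An infinite sequence $\vec t=(t_n(x))_{n=0}^\infty$ is an extracted subsequence of $\vec s$ if every initial segment $(t_n(x))_{n=0}^l$ is a finite extracted subsequence of $\vec s$. We write $\vec t\le\vec s$. A set $E\subseteq W(A)$ is large in $\vec s\in V^\infty(A)$ if $E\cap\langle\vec w\rangle_c\neq\emptyset$ for every infinite extracted subsequence $\vec w$ of $\vec s$. For $E\subseteq W(A)$ and nonempty $F\subseteq W(A)$, $E_F=\{z\in W(A): wz\in E\text{ for every }w\in F\}$. *)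

theory Defs
  imports Main
begin

text \<open>Letters of A \<union> {x} are represented as 'a option, with None playing the role of
the variable x.\<close>

definition var_word :: "'a set \<Rightarrow> 'a option list \<Rightarrow> bool" where
  "var_word A w \<longleftrightarrow> set w \<subseteq> insert None (Some ` A) \<and> None \<in> set w"

definition var_seq :: "'a set \<Rightarrow> (nat \<Rightarrow> 'a option list) \<Rightarrow> bool" where
  "var_seq A s \<longleftrightarrow> (\<forall>n. var_word A (s n))"

definition csubst :: "'a option list \<Rightarrow> 'a \<Rightarrow> 'a list" where
  "csubst w a = map (\<lambda>c. case c of None \<Rightarrow> a | Some b \<Rightarrow> b) w"

definition vsubst :: "'a option list \<Rightarrow> 'a option \<Rightarrow> 'a option list" where
  "vsubst w b = map (\<lambda>c. case c of None \<Rightarrow> b | Some a \<Rightarrow> Some a) w"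

definition cspan :: "'a set \<Rightarrow> (nat \<Rightarrow> 'a option list) \<Rightarrow> nat set \<Rightarrow> 'a list set" where
  "cspan A s I = {concat (map (\<lambda>(l, a). csubst (s l) a) ps) | ps.
      ps \<noteq> [] \<and> sorted_wrt (<) (map fst ps) \<and> set (map fst ps) \<subseteq> I \<and> set (map snd ps) \<subseteq> A}"

definition vspan :: "'a set \<Rightarrow> (nat \<Rightarrow> 'a option list) \<Rightarrow> nat set \<Rightarrow> 'a option list set" where
  "vspan A s I = {concat (map (\<lambda>(l, b). vsubst (s l) b) ps) | ps.
      ps \<noteq> [] \<and> sorted_wrt (<) (map fst ps) \<and> set (map fst ps) \<subseteq> I
      \<and> set (map snd ps) \<subseteq> insert None (Some ` A) \<and> None \<in> set (map snd ps)}"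

definition extracted :: "'a set \<Rightarrow> (nat \<Rightarrow> 'a option list) \<Rightarrow> (nat \<Rightarrow> 'a option list) \<Rightarrow> bool" where
  "extracted A t s \<longleftrightarrow> (\<forall>l. \<exists>m :: nat \<Rightarrow> nat. m 0 = 0 \<and> (\<forall>i\<le>l. m i < m (Suc i))
       \<and> (\<forall>i\<le>l. t i \<in> vspan A s {m i..<m (Suc i)}))"

definition large :: "'a set \<Rightarrow> 'a list set \<Rightarrow> (nat \<Rightarrow> 'a option list) \<Rightarrow> bool" where
  "large A E s \<longleftrightarrow> (\<forall>w. var_seq A w \<and> extracted A w s \<longrightarrow> E \<inter> cspan A w UNIV \<noteq> {})"

definition shiftset :: "'a set \<Rightarrow> 'a list set \<Rightarrow> 'a list set \<Rightarrow> 'a list set" where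
  "shiftset A E F = {z \<in> lists A. \<forall>w\<in>F. w @ z \<in> E}"

end

theory Submission
  imports Defs
begin

definition ultra :: "'b set set \<Rightarrow> bool" where
  "ultra U \<longleftrightarrow> {} \<notin> U \<and> (\<forall>X Y. X \<in> U \<longrightarrow> X \<subseteq> Y \<longrightarrow> Y \<in> U)
     \<and> (\<forall>X\<in>U. \<forall>Y\<in>U. X \<inter> Y \<in> U) \<and> (\<forall>X. X \<in> U \<or> - X \<in> U)"

definition fip :: "'b set set \<Rightarrow> bool" where
  "fip F \<longleftrightarrow> (\<forall>G. finite G \<longrightarrow> G \<subseteq> F \<longrightarrow> \<Inter>G \<noteq> {})"

lemma ultra_empty: "ultra U \<Longrightarrow> {} \<notin> U" by (simp add: ultra_def)
lemma ultra_mono: "ultra U \<Longrightarrow> X \<in> U \<Longrightarrow> X \<subseteq> Y \<Longrightarrow> Y \<in> U" by (simp add: ultra_def)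
lemma ultra_int: "ultra U \<Longrightarrow> X \<in> U \<Longrightarrow> Y \<in> U \<Longrightarrow> X \<inter> Y \<in> U" by (simp add: ultra_def)
lemma ultra_UNIV: "ultra U \<Longrightarrow> UNIV \<in> U"
  unfolding ultra_def by (metis Compl_empty_eq)
lemma ultra_compl: "ultra U \<Longrightarrow> (- X \<in> U) \<longleftrightarrow> X \<notin> U"
  unfolding ultra_def by (metis Compl_disjoint)
lemma ultra_nonempty: "ultra U \<Longrightarrow> X \<in> U \<Longrightarrow> X \<noteq> {}"
  by (auto simp: ultra_def)

lemma ultra_Inter: assumes "ultra U" shows "finite G \<Longrightarrow> G \<subseteq> U \<Longrightarrow> \<Inter>G \<in> U"
proof (induction G rule: finite_induct)
  case empty then show ?case by (simp add: ultra_UNIV assms)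
next
  case (insert x F) then show ?case by (simp add: ultra_int assms)
qed

lemma ultra_INT: "ultra U \<Longrightarrow> finite I \<Longrightarrow> (\<And>i. i \<in> I \<Longrightarrow> f i \<in> U) \<Longrightarrow> (\<Inter>i\<in>I. f i) \<in> U"
  using ultra_Inter[of U "f ` I"] by auto

lemma ultra_eq: "ultra U \<Longrightarrow> ultra V \<Longrightarrow> U \<subseteq> V \<Longrightarrow> U = V"
  unfolding ultra_def by (metis Compl_disjoint subsetD subsetI subset_antisym)

lemma fipD: "fip M \<Longrightarrow> finite G \<Longrightarrow> G \<subseteq> M \<Longrightarrow> \<Inter>G \<noteq> {}"
  unfolding fip_def by blast

lemma fip_ultra: "fip F \<Longrightarrow> \<exists>U. ultra U \<and> F \<subseteq> U"
proof -
  assume F: "fip F"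
  let ?A = "{G. F \<subseteq> G \<and> fip G}"
  have "\<exists>M\<in>?A. \<forall>X\<in>?A. M \<subseteq> X \<longrightarrow> X = M"
  proof (rule subset_Zorn_nonempty)
    show "?A \<noteq> {}" using F by blast
  next
    fix C assume C: "C \<noteq> {}" "subset.chain ?A C"
    have "fip (\<Union>C)" unfolding fip_def
    proof (intro allI impI)
      fix G assume G: "finite G" "G \<subseteq> \<Union>C"
      obtain B where B: "B \<in> C" "G \<subseteq> B" by (rule finite_subset_Union_chain[OF G C])
      have "fip B" using B(1) C(2) unfolding subset.chain_def by blast
      then show "\<Inter>G \<noteq> {}" using fipD G(1) B(2) by blast
    qed
    moreover have "F \<subseteq> \<Union>C" using C unfolding subset.chain_def by blast
    ultimately show "\<Union>C \<in> ?A" by blast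
  qed
  then obtain M where M0: "M \<in> ?A" and max0: "\<forall>X\<in>?A. M \<subseteq> X \<longrightarrow> X = M"
    by blast
  have M: "F \<subseteq> M" "fip M" using M0 by auto
  have max: "\<And>X. F \<subseteq> X \<Longrightarrow> fip X \<Longrightarrow> M \<subseteq> X \<Longrightarrow> X = M" using max0 by blast
  have add: "X \<in> M" if "fip (insert X M)" for X
    using max[of "insert X M"] that M by blast
  have "ultra M" unfolding ultra_def
  proof (intro conjI allI impI ballI)
    show "{} \<notin> M" using M(2) unfolding fip_def by (metis Inter_insert bot.extremum inf_bot_left finite.emptyI finite_insert insert_subset)
  next
    fix X Y assume "X \<in> M" "X \<subseteq> Y"
    show "Y \<in> M"
    proof (rule add)
      show "fip (insert Y M)" unfolding fip_def
      proof (intro allI impI)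
        fix G assume G: "finite G" "G \<subseteq> insert Y M"
        have "\<Inter>(insert X (G - {Y})) \<noteq> {}" by (rule fipD[OF M(2)]) (use G \<open>X \<in> M\<close> in auto)
        moreover have "\<Inter>(insert X (G - {Y})) \<subseteq> \<Inter>G" using \<open>X \<subseteq> Y\<close> by auto
        ultimately show "\<Inter>G \<noteq> {}" by blast
      qed
    qed
  next
    fix X Y assume "X \<in> M" "Y \<in> M"
    show "X \<inter> Y \<in> M"
    proof (rule add)
      show "fip (insert (X \<inter> Y) M)" unfolding fip_def
      proof (intro allI impI)
        fix G assume G: "finite G" "G \<subseteq> insert (X \<inter> Y) M"
        have "\<Inter>(insert X (insert Y (G - {X \<inter> Y}))) \<noteq> {}" by (rule fipD[OF M(2)]) (use G \<open>X \<in> M\<close> \<open>Y \<in> M\<close> in auto)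
        moreover have "\<Inter>(insert X (insert Y (G - {X \<inter> Y}))) \<subseteq> \<Inter>G" by auto
        ultimately show "\<Inter>G \<noteq> {}" by blast
      qed
    qed
  next
    fix X
    show "X \<in> M \<or> - X \<in> M"
    proof (rule ccontr)
      assume "\<not> (X \<in> M \<or> - X \<in> M)"
      then have "\<not> fip (insert X M)" "\<not> fip (insert (- X) M)" using add by blast+
      then obtain G1 G2 where G1: "finite G1" "G1 \<subseteq> insert X M" "\<Inter>G1 = {}"
        and G2: "finite G2" "G2 \<subseteq> insert (-X) M" "\<Inter>G2 = {}" unfolding fip_def by blast
      let ?G = "(G1 - {X}) \<union> (G2 - {-X})"
      have "\<Inter>?G \<noteq> {}" by (rule fipD[OF M(2)]) (use G1 G2 in auto)
      then obtain z where z: "z \<in> \<Inter>?G" by blast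
      show False
      proof (cases "z \<in> X")
        case True
        then have "z \<in> \<Inter>G1" using z by auto
        then show False using G1 by blast
      next
        case False
        then have "z \<in> \<Inter>G2" using z by auto
        then show False using G2 by blast
      qed
    qed
  qed
  then show ?thesis using M by blast
qed


definition rdiv :: "'c list set \<Rightarrow> 'c list set set \<Rightarrow> 'c list set" where
  "rdiv X v = {x. {y. x @ y \<in> X} \<in> v}"

definition mult :: "'c list set set \<Rightarrow> 'c list set set \<Rightarrow> 'c list set set" where
  "mult u v = {X. rdiv X v \<in> u}"

lemma mult_iff: "X \<in> mult u v \<longleftrightarrow> rdiv X v \<in> u" by (simp add: mult_def)

lemma rdiv_mono: "ultra v \<Longrightarrow> X \<subseteq> X' \<Longrightarrow> rdiv X v \<subseteq> rdiv X' v"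
  unfolding rdiv_def by (auto elim: ultra_mono)

lemma rdiv_compl: assumes v: "ultra v" shows "rdiv (- X) v = - rdiv X v"
proof -
  have "x \<in> rdiv (- X) v \<longleftrightarrow> x \<notin> rdiv X v" for x
  proof -
    have "{y. x @ y \<in> - X} = - {y. x @ y \<in> X}" by auto
    then show ?thesis unfolding rdiv_def using ultra_compl[OF v, of "{y. x @ y \<in> X}"] by simp
  qed
  then show ?thesis by blast
qed

lemma ultra_dich: "ultra u \<Longrightarrow> Z \<in> u \<or> - Z \<in> u" by (simp add: ultra_def)

lemma mult_ultra: assumes u: "ultra u" and v: "ultra v" shows "ultra (mult u v)"
proof -
  have "rdiv {} v = {}" unfolding rdiv_def using ultra_empty[OF v] by simp
  then have 1: "{} \<notin> mult u v" using ultra_empty[OF u] by (simp add: mult_iff)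
  have 2: "Y \<in> mult u v" if "X \<in> mult u v" "X \<subseteq> Y" for X Y
  proof -
    have "rdiv X v \<subseteq> rdiv Y v" by (rule rdiv_mono[OF v that(2)])
    then show ?thesis using ultra_mono[OF u] that(1) unfolding mult_iff by blast
  qed
  have 3: "X \<inter> Y \<in> mult u v" if "X \<in> mult u v" "Y \<in> mult u v" for X Y
  proof -
    have "rdiv X v \<inter> rdiv Y v \<subseteq> rdiv (X \<inter> Y) v"
      unfolding rdiv_def using ultra_int[OF v] by (auto simp: Collect_conj_eq)
    moreover have "rdiv X v \<inter> rdiv Y v \<in> u" using that ultra_int[OF u] unfolding mult_iff by blast
    ultimately show ?thesis using ultra_mono[OF u] unfolding mult_iff by blast
  qed
  have 4: "X \<in> mult u v \<or> - X \<in> mult u v" for X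
  proof -
    have "rdiv (- X) v = - rdiv X v" by (rule rdiv_compl[OF v])
    then show ?thesis using ultra_dich[OF u, of "rdiv X v"] unfolding mult_iff by simp
  qed
  show ?thesis unfolding ultra_def
    by (intro conjI 1 allI impI ballI 4) (auto intro: 2 3)
qed

lemma mult_assoc: "mult (mult u v) w = mult u (mult v w)"
  unfolding mult_def rdiv_def by simp

definition ssg :: "'c list set set set \<Rightarrow> bool" where
  "ssg S \<longleftrightarrow> (\<forall>u\<in>S. \<forall>v\<in>S. mult u v \<in> S)"

locale ucl =
  fixes BB :: "'c list set set"
  assumes closed: "ultra u \<Longrightarrow> ultra v \<Longrightarrow> BB \<subseteq> u \<Longrightarrow> BB \<subseteq> v \<Longrightarrow> BB \<subseteq> mult u v"
begin

definition T :: "'c list set set set" where "T = {U. ultra U \<and> BB \<subseteq> U}"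
definition clo :: "'c list set set \<Rightarrow> 'c list set set set" where "clo F = {U \<in> T. F \<subseteq> U}"

lemma T_mult: "u \<in> T \<Longrightarrow> v \<in> T \<Longrightarrow> mult u v \<in> T"
  unfolding T_def using closed mult_ultra by blast

lemma clo_T: "clo F \<subseteq> T" by (auto simp: clo_def)
lemma T_ultra: "u \<in> T \<Longrightarrow> ultra u" by (simp add: T_def)
lemma clo_anti: "F \<subseteq> F' \<Longrightarrow> clo F' \<subseteq> clo F" by (auto simp: clo_def)
lemma clo_Un: "clo (F \<union> F') = clo F \<inter> clo F'" by (auto simp: clo_def)
lemma clo_empty: "clo {} = T" by (auto simp: clo_def)
lemma clo_Union: "C \<noteq> {} \<Longrightarrow> clo (\<Union>C) = (\<Inter>F\<in>C. clo F)" by (auto simp: clo_def)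

lemma compact:
  assumes "\<And>G. finite G \<Longrightarrow> G \<subseteq> F \<Longrightarrow> clo G \<noteq> {}"
  shows "clo F \<noteq> {}"
proof -
  have "fip (BB \<union> F)" unfolding fip_def
  proof (intro allI impI)
    fix H assume H: "finite H" "H \<subseteq> BB \<union> F"
    obtain U where U: "U \<in> clo (H \<inter> F)" using assms[of "H \<inter> F"] H by blast
    then have "H \<subseteq> U" using H unfolding clo_def T_def by blast
    then have "\<Inter>H \<in> U" using ultra_Inter[of U H] U H unfolding clo_def T_def by blast
    then show "\<Inter>H \<noteq> {}" using ultra_nonempty U unfolding clo_def T_def by blast
  qed
  then obtain U where "ultra U" "BB \<union> F \<subseteq> U" using fip_ultra by blast
  then have "U \<in> clo F" unfolding clo_def T_def by blast
  then show ?thesis by blast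
qed

lemma image_closed:
  assumes x: "x \<in> T"
  shows "{mult y x | y. y \<in> clo F} = clo {X. \<forall>y\<in>clo F. X \<in> mult y x}"
proof (intro equalityI subsetI)
  fix r assume "r \<in> {mult y x | y. y \<in> clo F}"
  then obtain y where y: "y \<in> clo F" "r = mult y x" by blast
  then have "r \<in> T" using T_mult x clo_T by blast
  then show "r \<in> clo {X. \<forall>y\<in>clo F. X \<in> mult y x}" using y unfolding clo_def by blast
next
  fix U assume U: "U \<in> clo {X. \<forall>y\<in>clo F. X \<in> mult y x}"
  have Uu: "ultra U" using U clo_T T_ultra by blast
  have xu: "ultra x" using x T_ultra by blast
  let ?Fx = "F \<union> (\<lambda>X. rdiv X x) ` U"
  have "clo ?Fx \<noteq> {}"
  proof (rule compact)
    fix G assume G: "finite G" "G \<subseteq> ?Fx"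
    then have "G \<subseteq> (G \<inter> F) \<union> (G \<inter> (\<lambda>X. rdiv X x) ` U)" by blast
    obtain G2 where G2: "G2 \<subseteq> U" "finite G2" "G \<inter> (\<lambda>X. rdiv X x) ` U = (\<lambda>X. rdiv X x) ` G2"
      using finite_subset_image[of "G \<inter> (\<lambda>X. rdiv X x) ` U" "\<lambda>X. rdiv X x" U] G(1) by blast
    let ?Z = "\<Inter>G2"
    have Z: "?Z \<in> U" using ultra_Inter[OF Uu G2(2,1)] .
    have "\<exists>y\<in>clo F. ?Z \<in> mult y x"
    proof (rule ccontr)
      assume "\<not> ?thesis"
      then have "\<forall>y\<in>clo F. - ?Z \<in> mult y x"
        using ultra_compl mult_ultra xu clo_T T_ultra by blast
      then have "- ?Z \<in> U" using U unfolding clo_def by blast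
      then show False using Z ultra_compl[OF Uu] by blast
    qed
    then obtain y where y: "y \<in> clo F" "rdiv ?Z x \<in> y" unfolding mult_iff by blast
    have yu: "ultra y" using y clo_T T_ultra by blast
    have "\<forall>X\<in>G2. rdiv X x \<in> y"
    proof
      fix X assume "X \<in> G2"
      then have "rdiv ?Z x \<subseteq> rdiv X x" using rdiv_mono[OF xu] by blast
      then show "rdiv X x \<in> y" using y(2) ultra_mono[OF yu] by blast
    qed
    then have "(\<lambda>X. rdiv X x) ` G2 \<subseteq> y" by blast
    moreover have "F \<subseteq> y" "y \<in> T" using y(1) unfolding clo_def by auto
    moreover have "G \<subseteq> F \<union> (\<lambda>X. rdiv X x) ` G2" using G(2) G2(3) by blast
    ultimately have "y \<in> clo G" unfolding clo_def by blast
    then show "clo G \<noteq> {}" by blast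
  qed
  then obtain y where y: "y \<in> clo ?Fx" by blast
  then have "y \<in> clo F" unfolding clo_def by blast
  moreover have "(\<lambda>X. rdiv X x) ` U \<subseteq> y" using y unfolding clo_def by blast
  then have "U \<subseteq> mult y x" by (auto simp: mult_iff)
  moreover have "ultra (mult y x)" using mult_ultra[OF _ xu] y clo_T T_ultra by blast
  ultimately have "U = mult y x" using ultra_eq[OF Uu] by blast
  then show "U \<in> {mult y x | y. y \<in> clo F}" using \<open>y \<in> clo F\<close> by auto
qed

lemma clo_zorn:
  assumes ne: "clo F0 \<noteq> {}" and q: "Q (clo F0)"
  and inter: "\<And>S. S \<noteq> {} \<Longrightarrow> (\<forall>s\<in>S. Q s) \<Longrightarrow> Q (\<Inter>S)"
  shows "\<exists>F. clo F \<subseteq> clo F0 \<and> clo F \<noteq> {} \<and> Q (clo F) \<and>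
     (\<forall>F'. clo F' \<subseteq> clo F \<longrightarrow> clo F' \<noteq> {} \<longrightarrow> Q (clo F') \<longrightarrow> clo F' = clo F)"
proof -
  let ?A = "{F. F0 \<subseteq> F \<and> clo F \<noteq> {} \<and> Q (clo F)}"
  have "\<exists>M\<in>?A. \<forall>X\<in>?A. M \<subseteq> X \<longrightarrow> X = M"
  proof (rule subset_Zorn_nonempty)
    show "?A \<noteq> {}" using ne q by blast
  next
    fix C assume C: "C \<noteq> {}" "subset.chain ?A C"
    have CA: "C \<subseteq> ?A" using C(2) unfolding subset.chain_def by blast
    have "clo (\<Union>C) \<noteq> {}"
    proof (rule compact)
      fix G assume G: "finite G" "G \<subseteq> \<Union>C"
      obtain B where B: "B \<in> C" "G \<subseteq> B" by (rule finite_subset_Union_chain[OF G C])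
      then have "clo B \<subseteq> clo G" using clo_anti by blast
      then show "clo G \<noteq> {}" using B CA by blast
    qed
    moreover have "Q (clo (\<Union>C))"
      unfolding clo_Union[OF C(1)] by (rule inter) (use C CA in auto)
    moreover have "F0 \<subseteq> \<Union>C" using C CA by blast
    ultimately show "\<Union>C \<in> ?A" by blast
  qed
  then obtain M where M: "M \<in> ?A" and max: "\<forall>X\<in>?A. M \<subseteq> X \<longrightarrow> X = M" by blast
  have "clo M \<subseteq> clo F0" using M clo_anti by blast
  moreover
  have "clo F' = clo M" if "clo F' \<subseteq> clo M" "clo F' \<noteq> {}" "Q (clo F')" for F'
  proof -
    have e: "clo (M \<union> F') = clo F'" using that(1) clo_Un by blast
    then have "M \<union> F' \<in> ?A" using that M by auto
    then have "M \<union> F' = M" using max by blast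
    then show ?thesis using e by simp
  qed
  ultimately show ?thesis using M by blast
qed

lemma ssgD: "ssg S \<Longrightarrow> u \<in> S \<Longrightarrow> v \<in> S \<Longrightarrow> mult u v \<in> S"
  unfolding ssg_def by blast

lemma fix_closed:
  assumes xT: "x \<in> T"
  shows "clo (F \<union> (\<lambda>X. rdiv X x) ` x) = {y \<in> clo F. mult y x = x}"
proof (intro equalityI subsetI)
  fix y assume y: "y \<in> clo (F \<union> (\<lambda>X. rdiv X x) ` x)"
  then have yF: "y \<in> clo F" unfolding clo_def by blast
  have img: "(\<lambda>X. rdiv X x) ` x \<subseteq> y" using y unfolding clo_def by simp
  have sub: "x \<subseteq> mult y x"
  proof
    fix X assume "X \<in> x"
    then show "X \<in> mult y x" using img by (simp add: mult_iff image_subset_iff)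
  qed
  have yT: "y \<in> T" using yF clo_T by blast
  have "ultra (mult y x)" by (rule mult_ultra[OF T_ultra[OF yT] T_ultra[OF xT]])
  then have "x = mult y x" by (rule ultra_eq[OF T_ultra[OF xT] _ sub])
  then show "y \<in> {y \<in> clo F. mult y x = x}" using yF by simp
next
  fix y assume y: "y \<in> {y \<in> clo F. mult y x = x}"
  then have "X \<in> mult y x" if "X \<in> x" for X using that by simp
  then have "(\<lambda>X. rdiv X x) ` x \<subseteq> y" by (auto simp: mult_iff)
  then show "y \<in> clo (F \<union> (\<lambda>X. rdiv X x) ` x)" using y unfolding clo_def by simp
qed

lemma ellis:
  assumes ne: "clo F0 \<noteq> {}" and s: "ssg (clo F0)"
  shows "\<exists>e\<in>clo F0. mult e e = e"
proof -
  have "\<exists>F. clo F \<subseteq> clo F0 \<and> clo F \<noteq> {} \<and> ssg (clo F) \<and>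
     (\<forall>F'. clo F' \<subseteq> clo F \<longrightarrow> clo F' \<noteq> {} \<longrightarrow> ssg (clo F') \<longrightarrow> clo F' = clo F)"
    by (rule clo_zorn[of F0 ssg, OF ne s]) (auto simp: ssg_def)
  then obtain F where F: "clo F \<subseteq> clo F0" "clo F \<noteq> {}" "ssg (clo F)"
    and min0: "\<forall>F'. clo F' \<subseteq> clo F \<longrightarrow> clo F' \<noteq> {} \<longrightarrow> ssg (clo F') \<longrightarrow> clo F' = clo F" by blast
  have min: "clo F' = clo F" if "clo F' \<subseteq> clo F" "clo F' \<noteq> {}" "ssg (clo F')" for F'
    using min0 that by blast
  obtain x where x: "x \<in> clo F" using F(2) by blast
  have xT: "x \<in> T" using x clo_T by blast
  let ?R = "{mult y x | y. y \<in> clo F}"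
  have R: "?R = clo {X. \<forall>y\<in>clo F. X \<in> mult y x}" by (rule image_closed[OF xT])
  have "clo {X. \<forall>y\<in>clo F. X \<in> mult y x} = clo F"
  proof (rule min)
    show "clo {X. \<forall>y\<in>clo F. X \<in> mult y x} \<subseteq> clo F" unfolding R[symmetric]
    proof
      fix z assume "z \<in> ?R"
      then obtain y where "y \<in> clo F" "z = mult y x" by blast
      then show "z \<in> clo F" using ssgD[OF F(3)] x by blast
    qed
    have "mult x x \<in> ?R" using x by blast
    then show "clo {X. \<forall>y\<in>clo F. X \<in> mult y x} \<noteq> {}" unfolding R by blast
    show "ssg (clo {X. \<forall>y\<in>clo F. X \<in> mult y x})" unfolding R[symmetric] ssg_def
    proof (intro ballI)
      fix a b assume "a \<in> ?R" "b \<in> ?R"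
      then obtain a' b' where ab: "a' \<in> clo F" "b' \<in> clo F" "a = mult a' x" "b = mult b' x" by blast
      have "mult a b = mult (mult (mult a' x) b') x" using ab by (simp add: mult_assoc)
      moreover have "mult (mult a' x) b' \<in> clo F" using ssgD[OF F(3)] ssgD[OF F(3) ab(1) x] ab(2) by blast
      ultimately show "mult a b \<in> ?R" by blast
    qed
  qed
  then have "x \<in> ?R" using x R by simp
  then obtain y0 where y0: "y0 \<in> clo F" "mult y0 x = x" by blast
  let ?F' = "F \<union> (\<lambda>X. rdiv X x) ` x"
  have D': "clo ?F' = {y \<in> clo F. mult y x = x}" by (rule fix_closed[OF xT])
  have "clo ?F' = clo F"
  proof (rule min)
    show "clo ?F' \<subseteq> clo F" unfolding D' by blast
    show "clo ?F' \<noteq> {}" unfolding D' using y0 by blast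
    show "ssg (clo ?F')" unfolding ssg_def D'
    proof (intro ballI)
      fix a b assume a: "a \<in> {y \<in> clo F. mult y x = x}" and b: "b \<in> {y \<in> clo F. mult y x = x}"
      then have "mult a b \<in> clo F" using ssgD[OF F(3)] by blast
      moreover have "mult (mult a b) x = x" using a b by (simp add: mult_assoc)
      ultimately show "mult a b \<in> {y \<in> clo F. mult y x = x}" by blast
    qed
  qed
  then have "x \<in> {y \<in> clo F. mult y x = x}" using x D' by simp
  then have "mult x x = x" by simp
  then show ?thesis using x F(1) by blast
qed

lemma min_left_ideal:
  assumes Y: "ssg (clo FY)" and r: "r \<in> clo FY"
  shows "\<exists>F. clo F \<subseteq> {mult y r | y. y \<in> clo FY} \<and> clo F \<noteq> {}
     \<and> (\<forall>y\<in>clo FY. \<forall>l\<in>clo F. mult y l \<in> clo F)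
     \<and> (\<forall>l\<in>clo F. {mult y l | y. y \<in> clo FY} = clo F)"
proof -
  let ?Q = "\<lambda>S. \<forall>y\<in>clo FY. \<forall>l\<in>S. mult y l \<in> S"
  have rT: "r \<in> T" using r clo_T by blast
  obtain FR where FR: "{mult y r | y. y \<in> clo FY} = clo FR" using image_closed[OF rT] by blast
  have qR: "?Q (clo FR)" unfolding FR[symmetric]
  proof (intro ballI)
    fix y l assume "y \<in> clo FY" "l \<in> {mult y r | y. y \<in> clo FY}"
    then show "mult y l \<in> {mult y r | y. y \<in> clo FY}" using Y unfolding ssg_def
      by (auto simp: mult_assoc[symmetric])
  qed
  have "clo FR \<noteq> {}" using r FR by blast
  from clo_zorn[of FR ?Q, OF this qR]
  obtain F where F: "clo F \<subseteq> clo FR" "clo F \<noteq> {}" "?Q (clo F)"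
    and min: "\<And>F'. clo F' \<subseteq> clo F \<Longrightarrow> clo F' \<noteq> {} \<Longrightarrow> ?Q (clo F') \<Longrightarrow> clo F' = clo F" by blast
  have "{mult y l | y. y \<in> clo FY} = clo F" if l: "l \<in> clo F" for l
  proof -
    have lT: "l \<in> T" using l clo_T by blast
    obtain FL where FL: "{mult y l | y. y \<in> clo FY} = clo FL" using image_closed[OF lT] by blast
    have "clo FL = clo F"
    proof (rule min)
      show "clo FL \<subseteq> clo F" unfolding FL[symmetric]
      proof
        fix z assume "z \<in> {mult y l | y. y \<in> clo FY}"
        then obtain y where "y \<in> clo FY" "z = mult y l" by blast
        then show "z \<in> clo F" using F(3) l by blast
      qed
      have "mult r l \<in> {mult y l | y. y \<in> clo FY}" using r by blast
      then show "clo FL \<noteq> {}" unfolding FL by blast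
      show "?Q (clo FL)" unfolding FL[symmetric]
      proof (intro ballI)
        fix y l' assume "y \<in> clo FY" "l' \<in> {mult y l | y. y \<in> clo FY}"
        then show "mult y l' \<in> {mult y l | y. y \<in> clo FY}" using Y unfolding ssg_def
          by (auto simp: mult_assoc[symmetric])
      qed
    qed
    then show ?thesis using FL by simp
  qed
  note all = this
  show ?thesis
  proof (rule exI[of _ F], intro conjI)
    show "clo F \<subseteq> {mult y r |y. y \<in> clo FY}" using F(1) FR by simp
    show "clo F \<noteq> {}" by (rule F(2))
    show "\<forall>y\<in>clo FY. \<forall>l\<in>clo F. mult y l \<in> clo F" by (rule F(3))
    show "\<forall>l\<in>clo F. {mult y l |y. y \<in> clo FY} = clo F" by (intro ballI all)
  qed
qed

end

definition Above :: "nat \<Rightarrow> (nat \<times> 'a option) list set" where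
  "Above n = {ps. \<forall>l\<in>set (map fst ps). n < l}"

definition Good :: "'a set \<Rightarrow> (nat \<times> 'a option) list set" where
  "Good A = {ps. ps \<noteq> [] \<and> sorted_wrt (<) (map fst ps) \<and> set (map snd ps) \<subseteq> insert None (Some ` A)}"

definition Const :: "(nat \<times> 'a option) list set" where
  "Const = {ps. None \<notin> set (map snd ps)}"

definition Var :: "(nat \<times> 'a option) list set" where
  "Var = {ps. None \<in> set (map snd ps)}"

definition BB :: "'a set \<Rightarrow> (nat \<times> 'a option) list set set" where
  "BB A = insert (Good A) (range Above)"

definition mx :: "(nat \<times> 'b) list \<Rightarrow> nat" where
  "mx ps = Max (insert 0 (set (map fst ps)))"

lemma mx_ge: "l \<in> set (map fst ps) \<Longrightarrow> l \<le> mx ps"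
  unfolding mx_def by (simp add: Max_ge_iff)

lemma Above_mono: "m \<le> n \<Longrightarrow> Above n \<subseteq> Above m"
  unfolding Above_def by auto

lemma Good_app: "x \<in> Good A \<Longrightarrow> y \<in> Good A \<Longrightarrow> y \<in> Above (mx x) \<Longrightarrow> x @ y \<in> Good A"
proof -
  assume x: "x \<in> Good A" and y: "y \<in> Good A" and ya: "y \<in> Above (mx x)"
  have "\<forall>p\<in>set (map fst x). \<forall>q\<in>set (map fst y). p < q"
  proof (intro ballI)
    fix p q assume p: "p \<in> set (map fst x)" and q: "q \<in> set (map fst y)"
    have "p \<le> mx x" by (rule mx_ge[OF p])
    moreover have "mx x < q" using ya q unfolding Above_def by blast
    ultimately show "p < q" by simp
  qed
  then show ?thesis using x y unfolding Good_def by (auto simp: sorted_wrt_append)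
qed

lemma Above_app: "x \<in> Above n \<Longrightarrow> y \<in> Above n \<Longrightarrow> x @ y \<in> Above n"
  unfolding Above_def by auto

lemma BB_closed:
  assumes u: "ultra u" and v: "ultra v" and bu: "BB A \<subseteq> u" and bv: "BB A \<subseteq> v"
  shows "BB A \<subseteq> mult u v"
proof
  fix X assume "X \<in> BB A"
  then consider "X = Good A" | n where "X = Above n" unfolding BB_def by blast
  then show "X \<in> mult u v"
  proof cases
    case 1
    have "Good A \<subseteq> rdiv (Good A) v"
    proof
      fix x assume x: "x \<in> Good A"
      have "Good A \<inter> Above (mx x) \<in> v" using bv ultra_int[OF v] unfolding BB_def by blast
      moreover have "Good A \<inter> Above (mx x) \<subseteq> {y. x @ y \<in> Good A}" using Good_app[OF x] by blast
      ultimately show "x \<in> rdiv (Good A) v" unfolding rdiv_def using ultra_mono[OF v] by blast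
    qed
    moreover have "Good A \<in> u" using bu unfolding BB_def by blast
    ultimately show ?thesis using 1 ultra_mono[OF u] by (simp add: mult_iff)
  next
    case 2
    have "Above n \<subseteq> rdiv (Above n) v"
    proof
      fix x :: "(nat \<times> 'a option) list" assume x: "x \<in> Above n"
      have "Above n \<in> v" using bv unfolding BB_def by blast
      moreover have "Above n \<subseteq> {y. x @ y \<in> Above n}" using Above_app[OF x] by blast
      ultimately show "x \<in> rdiv (Above n) v" unfolding rdiv_def using ultra_mono[OF v] by blast
    qed
    moreover have "Above n \<in> u" using bu unfolding BB_def by blast
    ultimately show ?thesis using 2 ultra_mono[OF u] by (simp add: mult_iff)
  qed
qed

definition sigma :: "'a \<Rightarrow> (nat \<times> 'a option) list \<Rightarrow> (nat \<times> 'a option) list" where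
  "sigma a ps = map (\<lambda>(l, b). (l, Some (case b of None \<Rightarrow> a | Some c \<Rightarrow> c))) ps"

definition sig :: "'a \<Rightarrow> (nat \<times> 'a option) list set set \<Rightarrow> (nat \<times> 'a option) list set set" where
  "sig a U = {X. sigma a -` X \<in> U}"

lemma sigma_app: "sigma a (x @ y) = sigma a x @ sigma a y" by (simp add: sigma_def)

lemma sigma_fst: "map fst (sigma a ps) = map fst ps"
  by (induction ps) (auto simp: sigma_def)

lemma sigma_Const: "sigma a ps \<in> Const" unfolding sigma_def Const_def by auto

lemma sigma_id: "ps \<in> Const \<Longrightarrow> sigma a ps = ps"
  unfolding sigma_def Const_def by (induction ps) (auto split: option.splits)

lemma sigma_snd: "a \<in> A \<Longrightarrow> set (map snd ps) \<subseteq> insert None (Some ` A) \<Longrightarrow>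
   set (map snd (sigma a ps)) \<subseteq> Some ` A"
  unfolding sigma_def by (induction ps) (auto split: option.splits)

lemma sigma_Good: "a \<in> A \<Longrightarrow> ps \<in> Good A \<Longrightarrow> sigma a ps \<in> Good A"
proof -
  assume a: "a \<in> A" and ps: "ps \<in> Good A"
  have "sigma a ps \<noteq> []" using ps unfolding Good_def sigma_def by simp
  moreover have "set (map snd (sigma a ps)) \<subseteq> insert None (Some ` A)"
    using sigma_snd[OF a] ps unfolding Good_def by blast
  ultimately show ?thesis using ps unfolding Good_def by (simp add: sigma_fst)
qed

lemma sigma_Above: "ps \<in> Above n \<Longrightarrow> sigma a ps \<in> Above n"
  unfolding Above_def sigma_def by auto

lemma sig_ultra: assumes "ultra U" shows "ultra (sig a U)"
proof -
  have 4: "X \<in> sig a U \<or> - X \<in> sig a U" for X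
    using ultra_dich[OF assms, of "sigma a -` X"] by (simp add: sig_def vimage_Compl)
  have 3: "X \<inter> Y \<in> sig a U" if "X \<in> sig a U" "Y \<in> sig a U" for X Y
    using ultra_int[OF assms] that by (simp add: sig_def vimage_Int)
  have 2: "Y \<in> sig a U" if "X \<in> sig a U" "X \<subseteq> Y" for X Y
  proof -
    have "sigma a -` X \<subseteq> sigma a -` Y" using that(2) by blast
    then show ?thesis using that(1) ultra_mono[OF assms] by (simp add: sig_def)
  qed
  have 1: "{} \<notin> sig a U" using ultra_empty[OF assms] by (simp add: sig_def)
  show ?thesis unfolding ultra_def
    by (intro conjI 1 allI impI ballI 4) (auto intro: 2 3)
qed

lemma sig_mult: "sig a (mult u v) = mult (sig a u) (sig a v)"
proof -
  have "sigma a -` rdiv X (sig a v) = rdiv (sigma a -` X) v" for X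
    unfolding rdiv_def sig_def by (auto simp: sigma_app)
  then show ?thesis unfolding sig_def mult_def by auto
qed

locale wset =
  fixes A :: "'a set"
  assumes A_fin: "finite A" and A_ne: "A \<noteq> {}"
begin

sublocale ucl "BB A"
  by unfold_locales (rule BB_closed)

lemma T_BB: "U \<in> T \<Longrightarrow> BB A \<subseteq> U" by (simp add: T_def)
lemma T_Good: "U \<in> T \<Longrightarrow> Good A \<in> U" using T_BB unfolding BB_def by blast
lemma T_Above: "U \<in> T \<Longrightarrow> Above n \<in> U" using T_BB unfolding BB_def by blast
lemma T_I: "ultra U \<Longrightarrow> BB A \<subseteq> U \<Longrightarrow> U \<in> T" by (simp add: T_def)

lemma clo_single_ne:
  assumes ex: "\<And>n. \<exists>ps. ps \<in> Good A \<and> ps \<in> P \<and> ps \<in> Above n"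
  shows "clo {P} \<noteq> {}"
proof -
  have "fip (BB A \<union> {P})" unfolding fip_def
  proof (intro allI impI)
    fix H assume H: "finite H" "H \<subseteq> BB A \<union> {P}"
    have Hs: "H \<subseteq> {Good A, P} \<union> Above ` {n. Above n \<in> H}" using H(2) unfolding BB_def by blast
    moreover have "finite {n. Above n \<in> H}"
    proof -
      have "inj_on (Above :: nat \<Rightarrow> (nat \<times> 'a option) list set) {n. Above n \<in> H}"
      proof (rule inj_onI)
        fix m n assume e: "Above m = (Above n :: (nat \<times> 'a option) list set)"
        have "[(Suc m, None)] \<in> (Above m :: (nat \<times> 'a option) list set)" "[(Suc n, None)] \<in> (Above n :: (nat \<times> 'a option) list set)"
          unfolding Above_def by auto
        then have "[(Suc m, None)] \<in> (Above n :: (nat \<times> 'a option) list set)" "[(Suc n, None)] \<in> (Above m :: (nat \<times> 'a option) list set)"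
          using e by auto
        then have "n < Suc m" "m < Suc n" unfolding Above_def by auto
        then show "m = n" by simp
      qed
      moreover have "Above ` {n. Above n \<in> H} \<subseteq> H" by blast
      ultimately show ?thesis using H(1) finite_imageD finite_subset by blast
    qed
    then obtain N where N: "\<forall>n\<in>{n. Above n \<in> H}. n \<le> N"
      using finite_nat_set_iff_bounded_le by blast
    obtain ps where ps: "ps \<in> Good A" "ps \<in> P" "ps \<in> Above N" using ex by blast
    have "ps \<in> Above n" if "n \<in> {n. Above n \<in> H}" for n using N that ps(3) Above_mono by blast
    then have "ps \<in> \<Inter>H" using Hs ps by blast
    then show "\<Inter>H \<noteq> {}" by blast
  qed
  then obtain U where "ultra U" "BB A \<union> {P} \<subseteq> U" using fip_ultra by blast
  then have "U \<in> clo {P}" unfolding clo_def using T_I by blast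
  then show ?thesis by blast
qed

lemma Y_ne: "clo {Const} \<noteq> {}"
proof (rule clo_single_ne)
  fix n obtain a where "a \<in> A" using A_ne by blast
  then show "\<exists>ps. ps \<in> Good A \<and> ps \<in> Const \<and> ps \<in> Above n"
    by (intro exI[of _ "[(Suc n, Some a)]"]) (auto simp: Good_def Const_def Above_def)
qed

lemma V_ne: "clo {Var} \<noteq> {}"
proof (rule clo_single_ne)
  fix n
  show "\<exists>ps. ps \<in> Good A \<and> ps \<in> Var \<and> ps \<in> Above n"
    by (intro exI[of _ "[(Suc n, None)]"]) (auto simp: Good_def Var_def Above_def)
qed

lemma Y_ssg: "ssg (clo {Const})"
  unfolding ssg_def
proof (intro ballI)
  fix u v assume u: "u \<in> clo {Const}" and v: "v \<in> clo {Const}"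
  have "Const \<subseteq> rdiv Const v"
  proof
    fix x :: "(nat \<times> 'a option) list" assume "x \<in> Const"
    then have "Const \<subseteq> {y. x @ y \<in> Const}" unfolding Const_def by auto
    moreover have "Const \<in> v" using v unfolding clo_def by blast
    ultimately show "x \<in> rdiv Const v" unfolding rdiv_def using ultra_mono T_ultra v clo_T by blast
  qed
  moreover have "Const \<in> u" using u unfolding clo_def by blast
  ultimately have "Const \<in> mult u v" using ultra_mono T_ultra u clo_T by (simp add: mult_iff) blast
  moreover have "mult u v \<in> T" using T_mult u v clo_T by blast
  ultimately show "mult u v \<in> clo {Const}" unfolding clo_def by blast
qed

lemma Var_right: "u \<in> T \<Longrightarrow> v \<in> T \<Longrightarrow> Var \<in> v \<Longrightarrow> Var \<in> mult u v"
proof -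
  assume u: "u \<in> T" and v: "v \<in> T" and "Var \<in> v"
  have "rdiv Var v = UNIV"
  proof -
    have "Var \<subseteq> {y. x @ y \<in> Var}" for x :: "(nat \<times> 'a option) list" unfolding Var_def by auto
    then show ?thesis unfolding rdiv_def using ultra_mono T_ultra v \<open>Var \<in> v\<close> by blast
  qed
  then show ?thesis using ultra_UNIV[OF T_ultra[OF u]] by (simp add: mult_iff)
qed

lemma sig_T: "a \<in> A \<Longrightarrow> U \<in> T \<Longrightarrow> sig a U \<in> clo {Const}"
proof -
  assume a: "a \<in> A" and U: "U \<in> T"
  have su: "ultra (sig a U)" by (rule sig_ultra[OF T_ultra[OF U]])
  have sb: "BB A \<subseteq> sig a U"
  proof
    fix X assume "X \<in> BB A"
    then consider "X = Good A" | n where "X = Above n" unfolding BB_def by blast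
    then show "X \<in> sig a U"
    proof cases
      case 1
      have "Good A \<subseteq> sigma a -` Good A"
      proof
        fix z :: "(nat \<times> 'a option) list" assume "z \<in> Good A" then show "z \<in> sigma a -` Good A" using sigma_Good[OF a, of z] by simp
      qed
      then have "sigma a -` Good A \<in> U" using ultra_mono[OF T_ultra[OF U] T_Good[OF U]] by blast
      then show ?thesis using 1 by (simp add: sig_def)
    next
      case 2
      have "Above n \<subseteq> sigma a -` Above n"
      proof
        fix z :: "(nat \<times> 'a option) list" assume "z \<in> Above n" then show "z \<in> sigma a -` Above n" using sigma_Above[of z n a] by simp
      qed
      then have "sigma a -` Above n \<in> U" using ultra_mono[OF T_ultra[OF U] T_Above[OF U]] by blast
      then show ?thesis using 2 by (simp add: sig_def)
    qed
  qed
  have "sigma a -` Const = UNIV" by (simp add: set_eq_iff sigma_Const)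
  then have "Const \<in> sig a U" unfolding sig_def using ultra_UNIV[OF T_ultra[OF U]] by simp
  moreover have "sig a U \<in> T" using T_I[OF su sb] .
  ultimately show ?thesis unfolding clo_def by blast
qed

lemma sig_Y: "U \<in> clo {Const} \<Longrightarrow> sig a U = U"
proof -
  assume U: "U \<in> clo {Const}"
  have uu: "ultra U" using U clo_T T_ultra by blast
  have "U \<subseteq> sig a U"
  proof
    fix X assume "X \<in> U"
    moreover have "Const \<in> U" using U unfolding clo_def by blast
    ultimately have "X \<inter> Const \<in> U" using ultra_int[OF uu] by blast
    moreover have "X \<inter> Const \<subseteq> sigma a -` X"
    proof
      fix z assume "z \<in> X \<inter> Const"
      then show "z \<in> sigma a -` X" using sigma_id[of z a] by simp
    qed
    ultimately have "sigma a -` X \<in> U" using ultra_mono[OF uu] by blast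
    then show "X \<in> sig a U" unfolding sig_def by simp
  qed
  then show ?thesis using ultra_eq[OF uu sig_ultra[OF uu]] by metis
qed

end

context wset begin

lemma Var_left: "u \<in> T \<Longrightarrow> v \<in> T \<Longrightarrow> Var \<in> u \<Longrightarrow> Var \<in> mult u v"
proof -
  assume u: "u \<in> T" and v: "v \<in> T" and uv: "Var \<in> u"
  have "Var \<subseteq> rdiv Var v"
  proof
    fix x :: "(nat \<times> 'a option) list" assume "x \<in> Var"
    then have "{y. x @ y \<in> Var} = UNIV" unfolding Var_def by auto
    then show "x \<in> rdiv Var v" unfolding rdiv_def using ultra_UNIV[OF T_ultra[OF v]] by simp
  qed
  then have "rdiv Var v \<in> u" using ultra_mono[OF T_ultra[OF u] uv] by blast
  then show ?thesis by (simp add: mult_iff)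
qed

lemma T_ssg: "ssg (clo {})"
  unfolding ssg_def clo_empty using T_mult by blast

lemma exists_pq:
  "\<exists>p q. p \<in> clo {Const} \<and> mult p p = p \<and> q \<in> clo {Var} \<and> (\<forall>a\<in>A. sig a q = p)"
proof -
  obtain r where r: "r \<in> clo {Const}" using Y_ne by blast
  obtain FM where FM1: "clo FM \<subseteq> {mult y r | y. y \<in> clo {Const}}" and FM2: "clo FM \<noteq> {}"
    and LY: "\<forall>y\<in>clo {Const}. \<forall>l\<in>clo FM. mult y l \<in> clo FM"
    and MY: "\<forall>l\<in>clo FM. {mult y l | y. y \<in> clo {Const}} = clo FM"
    using min_left_ideal[OF Y_ssg r] by blast
  have FMY: "clo FM \<subseteq> clo {Const}"
  proof
    fix z assume "z \<in> clo FM"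
    then obtain y where "y \<in> clo {Const}" "z = mult y r" using FM1 by blast
    then show "z \<in> clo {Const}" using ssgD[OF Y_ssg] r by blast
  qed
  have "ssg (clo FM)" unfolding ssg_def using LY FMY by blast
  then obtain p where p: "p \<in> clo FM" "mult p p = p" using ellis[OF FM2] by blast
  have pY: "p \<in> clo {Const}" using p FMY by blast
  have pT: "p \<in> clo {}" using pY clo_T clo_empty by blast
  obtain FN where FN1: "clo FN \<subseteq> {mult y p | y. y \<in> clo {}}" and FN2: "clo FN \<noteq> {}"
    and LT: "\<forall>y\<in>clo {}. \<forall>l\<in>clo FN. mult y l \<in> clo FN"
    and MT: "\<forall>l\<in>clo FN. {mult y l | y. y \<in> clo {}} = clo FN"
    using min_left_ideal[OF T_ssg pT] by blast
  have FNT: "clo FN \<subseteq> clo {}" using clo_T clo_empty by blast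
  have "ssg (clo FN)" unfolding ssg_def using LT FNT by blast
  then obtain q' where q': "q' \<in> clo FN" "mult q' q' = q'" using ellis[OF FN2] by blast
  obtain r' where "r' \<in> clo {}" "q' = mult r' p" using q'(1) FN1 by blast
  then have q'p: "mult q' p = q'" using p(2) by (simp add: mult_assoc)
  define q where "q = mult p q'"
  have qN: "q \<in> clo FN" unfolding q_def using LT pT q'(1) by blast
  have qq: "mult q q = q" unfolding q_def
    by (metis mult_assoc q'(2) q'p)
  have qp: "mult q p = q" unfolding q_def by (simp add: mult_assoc q'p)
  have pq: "mult p q = q" unfolding q_def by (simp add: mult_assoc[symmetric] p(2))
  obtain v0 where v0: "v0 \<in> clo {Var}" using V_ne by blast
  have v0T: "v0 \<in> clo {}" using v0 clo_T clo_empty by blast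
  define w where "w = mult v0 q"
  have wN: "w \<in> clo FN" unfolding w_def using LT v0T qN by blast
  have wVar: "Var \<in> w" unfolding w_def
    using Var_left v0 qN FNT clo_T unfolding clo_def by blast
  have "q \<in> {mult y w | y. y \<in> clo {}}" using MT wN qN by blast
  then obtain y where y: "y \<in> clo {}" "q = mult y w" by blast
  have qT: "q \<in> T" using qN FNT clo_T by blast
  have "Var \<in> q" using y Var_right wVar wN FNT clo_T by (metis subsetD)
  then have qV: "q \<in> clo {Var}" using qT unfolding clo_def by blast
  have "sig a q = p" if a: "a \<in> A" for a
  proof -
    define e where "e = sig a q"
    have eY: "e \<in> clo {Const}" unfolding e_def by (rule sig_T[OF a qT])
    have sp: "sig a p = p" by (rule sig_Y[OF pY])
    have ee: "mult e e = e" unfolding e_def by (metis sig_mult qq)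
    have ep: "mult e p = e" unfolding e_def by (metis sig_mult qp sp)
    have pe: "mult p e = e" unfolding e_def by (metis sig_mult pq sp)
    have "e \<in> clo FM" using LY eY p(1) ep by metis
    then have "p \<in> {mult y e | y. y \<in> clo {Const}}" using MY p(1) by blast
    then obtain y where "y \<in> clo {Const}" "p = mult y e" by blast
    then have "mult p e = p" using ee by (simp add: mult_assoc)
    then show ?thesis using pe unfolding e_def by simp
  qed
  then show ?thesis using pY p(2) qV by blast
qed

end

locale wpq = wset A for A :: "'a set" +
  fixes p q :: "(nat \<times> 'a option) list set set"
  assumes pY: "p \<in> clo {Const}" and pp: "mult p p = p" and qV: "q \<in> clo {Var}"
    and sigq: "\<And>a. a \<in> A \<Longrightarrow> sig a q = p"
begin

definition star :: "(nat \<times> 'a option) list set \<Rightarrow> (nat \<times> 'a option) list set" where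
  "star B = {x \<in> B. {y. x @ y \<in> B} \<in> p}"

lemma p_ultra: "ultra p" using pY clo_T T_ultra by blast
lemma q_ultra: "ultra q" using qV clo_T T_ultra by blast
lemma qT: "q \<in> T" using qV clo_T by blast

lemma star_sub: "star B \<subseteq> B" unfolding star_def by blast

lemma in_pp: "B \<in> p \<Longrightarrow> rdiv B p \<in> p"
  using pp mult_iff by metis

lemma star_in: "B \<in> p \<Longrightarrow> star B \<in> p"
proof -
  assume B: "B \<in> p"
  have "star B = B \<inter> rdiv B p" unfolding star_def rdiv_def by blast
  then show ?thesis using ultra_int[OF p_ultra B in_pp[OF B]] by simp
qed

lemma star_shift: "x \<in> star B \<Longrightarrow> {y. x @ y \<in> star B} \<in> p"
proof -
  assume x: "x \<in> star B"
  define C where "C = {y. x @ y \<in> B}"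
  have C: "C \<in> p" using x unfolding star_def C_def by blast
  have "{y. x @ y \<in> star B} = C \<inter> rdiv C p" unfolding star_def C_def rdiv_def by auto
  then show ?thesis using ultra_int[OF p_ultra C in_pp[OF C]] by simp
qed

definition good_t :: "(nat \<times> 'a option) list set \<Rightarrow> nat \<Rightarrow> (nat \<times> 'a option) list \<Rightarrow> bool" where
  "good_t B N t \<longleftrightarrow> t \<in> Var \<and> t \<in> Good A \<and> t \<in> Above N \<and> (\<forall>a\<in>A. sigma a t \<in> star B)"

lemma good_t_ex: "B \<in> p \<Longrightarrow> \<exists>t. good_t B N t"
proof -
  assume B: "B \<in> p"
  let ?G = "Var \<inter> Good A \<inter> Above N \<inter> (\<Inter>a\<in>A. sigma a -` star B)"
  have "(\<Inter>a\<in>A. sigma a -` star B) \<in> q"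
  proof (rule ultra_INT[OF q_ultra A_fin])
    fix a assume a: "a \<in> A"
    have "star B \<in> sig a q" using sigq[OF a] star_in[OF B] by simp
    then show "sigma a -` star B \<in> q" by (simp add: sig_def)
  qed
  moreover have "Var \<in> q" using qV unfolding clo_def by blast
  moreover have "Good A \<in> q" "Above N \<in> q" using T_Good T_Above qT by auto
  ultimately have "?G \<in> q" using ultra_int[OF q_ultra] by simp
  then have "?G \<noteq> {}" using ultra_nonempty[OF q_ultra] by blast
  then obtain t where "t \<in> ?G" by blast
  then have "good_t B N t" unfolding good_t_def by blast
  then show ?thesis by blast
qed

definition nextB :: "(nat \<times> 'a option) list set \<Rightarrow> (nat \<times> 'a option) list \<Rightarrow> (nat \<times> 'a option) list set" where
  "nextB B t = star B \<inter> (\<Inter>a\<in>A. {y. sigma a t @ y \<in> star B})"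

lemma nextB_in: "B \<in> p \<Longrightarrow> good_t B N t \<Longrightarrow> nextB B t \<in> p"
proof -
  assume B: "B \<in> p" and t: "good_t B N t"
  have "(\<Inter>a\<in>A. {y. sigma a t @ y \<in> star B}) \<in> p"
    by (rule ultra_INT[OF p_ultra A_fin]) (use t star_shift in \<open>auto simp: good_t_def\<close>)
  then show ?thesis unfolding nextB_def using ultra_int[OF p_ultra star_in[OF B]] by simp
qed

definition stp :: "(nat \<times> 'a option) list set \<Rightarrow> nat \<Rightarrow> (nat \<times> 'a option) list" where
  "stp B N = (SOME t. good_t B N t)"

primrec seqp :: "(nat \<times> 'a option) list set \<Rightarrow> nat \<Rightarrow> (nat \<times> 'a option) list set \<times> (nat \<times> 'a option) list" where
  "seqp K 0 = (K, stp K 0)"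
| "seqp K (Suc n) = (let B' = nextB (fst (seqp K n)) (snd (seqp K n)) in (B', stp B' (mx (snd (seqp K n)))))"

lemma seqp_props:
  assumes K: "K \<in> p"
  shows "fst (seqp K n) \<in> p \<and> good_t (fst (seqp K n)) (case n of 0 \<Rightarrow> 0 | Suc m \<Rightarrow> mx (snd (seqp K m))) (snd (seqp K n))"
proof (induction n)
  case 0
  have "good_t K 0 (stp K 0)" unfolding stp_def using someI_ex[OF good_t_ex[OF K]] .
  then show ?case using K by simp
next
  case (Suc n)
  let ?B = "fst (seqp K n)" and ?t = "snd (seqp K n)"
  have B': "nextB ?B ?t \<in> p" using Suc nextB_in by blast
  have "good_t (nextB ?B ?t) (mx ?t) (stp (nextB ?B ?t) (mx ?t))"
    unfolding stp_def using someI_ex[OF good_t_ex[OF B']] .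
  then show ?case using B' by (simp add: Let_def)
qed

end

context wpq begin

definition BK where "BK K n = fst (seqp K n)"
definition tK where "tK K n = snd (seqp K n)"

lemma BK_Suc: "BK K (Suc n) = nextB (BK K n) (tK K n)"
  unfolding BK_def tK_def by (simp add: Let_def)

lemma BK_0: "BK K 0 = K" unfolding BK_def by simp

lemma BK_dec: "BK K (Suc n) \<subseteq> BK K n"
  unfolding BK_Suc nextB_def using star_sub by blast

lemma BK_anti: "m \<le> n \<Longrightarrow> BK K n \<subseteq> BK K m"
proof (induction n)
  case 0 then show ?case by simp
next
  case (Suc n)
  then show ?case using BK_dec by (metis le_Suc_eq order_refl order_trans)
qed

lemma tK_good: "K \<in> p \<Longrightarrow> good_t (BK K n) (case n of 0 \<Rightarrow> 0 | Suc m \<Rightarrow> mx (tK K m)) (tK K n)"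
  using seqp_props unfolding BK_def tK_def by blast

lemma tK_Var: "K \<in> p \<Longrightarrow> tK K n \<in> Var" using tK_good unfolding good_t_def by blast
lemma tK_Good: "K \<in> p \<Longrightarrow> tK K n \<in> Good A" using tK_good unfolding good_t_def by blast
lemma tK_Above: "K \<in> p \<Longrightarrow> tK K (Suc n) \<in> Above (mx (tK K n))"
  using tK_good[of K "Suc n"] unfolding good_t_def by simp
lemma tK_star: "K \<in> p \<Longrightarrow> a \<in> A \<Longrightarrow> sigma a (tK K n) \<in> star (BK K n)"
  using tK_good unfolding good_t_def by blast

lemma prod_in:
  assumes K: "K \<in> p"
  shows "ps \<noteq> [] \<Longrightarrow> sorted_wrt (<) (map fst ps) \<Longrightarrow> set (map snd ps) \<subseteq> A \<Longrightarrow>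
    concat (map (\<lambda>(l, a). sigma a (tK K l)) ps) \<in> BK K (fst (hd ps))"
proof (induction ps)
  case Nil then show ?case by simp
next
  case (Cons x rest)
  obtain l a where x: "x = (l, a)" by (cases x)
  have a: "a \<in> A" using Cons.prems x by simp
  have st: "sigma a (tK K l) \<in> star (BK K l)" by (rule tK_star[OF K a])
  show ?case
  proof (cases "rest = []")
    case True
    then show ?thesis using st star_sub x by auto
  next
    case False
    have R: "concat (map (\<lambda>(l, a). sigma a (tK K l)) rest) \<in> BK K (fst (hd rest))"
      using Cons False by simp
    have "l < fst (hd rest)" using Cons.prems(2) False x by (cases rest) auto
    then have "BK K (fst (hd rest)) \<subseteq> BK K (Suc l)" using BK_anti by simp
    also have "\<dots> \<subseteq> {y. sigma a (tK K l) @ y \<in> star (BK K l)}"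
      unfolding BK_Suc nextB_def using a by blast
    finally have "sigma a (tK K l) @ concat (map (\<lambda>(l, a). sigma a (tK K l)) rest) \<in> star (BK K l)"
      using R by blast
    then show ?thesis using x star_sub by auto
  qed
qed

end

lemma csubst_vsubst: "csubst (vsubst w b) a = csubst w (case b of None \<Rightarrow> a | Some c \<Rightarrow> c)"
  unfolding csubst_def vsubst_def by (induction w) (auto split: option.splits)

lemma csubst_concat: "csubst (concat ws) a = concat (map (\<lambda>w. csubst w a) ws)"
  unfolding csubst_def by (simp add: map_concat)

lemma cspanI:
  assumes "ps \<noteq> []" "sorted_wrt (<) (map fst ps)" "set (map fst ps) \<subseteq> I" "set (map snd ps) \<subseteq> A"
  shows "concat (map (\<lambda>(l, a). csubst (w l) a) ps) \<in> cspan A w I"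
  unfolding cspan_def using assms by blast

lemma words_large:
  fixes A :: "'a set" and E :: "'a list set" and w :: "nat \<Rightarrow> 'a option list"
  assumes A: "A \<noteq> {}" and EA: "E \<subseteq> lists A" and cw: "cspan A w UNIV \<subseteq> E"
  shows "large A (E \<inter> shiftset A E (cspan A w {0..n})) (\<lambda>i. w (n + 1 + i))"
  unfolding large_def
proof (intro allI impI)
  fix u assume u: "var_seq A u \<and> extracted A u (\<lambda>i. w (n + 1 + i))"
  obtain m :: "nat \<Rightarrow> nat" where m: "m 0 = 0" "u 0 \<in> vspan A (\<lambda>i. w (n + 1 + i)) {m 0..<m (Suc 0)}"
    using u unfolding extracted_def by (metis le_refl)
  then obtain ps where ps: "u 0 = concat (map (\<lambda>(l, b). vsubst (w (n + 1 + l)) b) ps)"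
    "ps \<noteq> []" "sorted_wrt (<) (map fst ps)"
    "set (map snd ps) \<subseteq> insert None (Some ` A)"
    unfolding vspan_def by blast
  obtain a where a: "a \<in> A" using A by blast
  define f where "f = (\<lambda>b. case b of None \<Rightarrow> a | Some c \<Rightarrow> c)"
  define qs where "qs = map (\<lambda>(l, b). (n + 1 + l, f b)) ps"
  define z where "z = csubst (u 0) a"
  have zq: "z = concat (map (\<lambda>(l, c). csubst (w l) c) qs)"
    unfolding z_def ps(1) qs_def csubst_concat by (simp add: csubst_vsubst f_def case_prod_beta o_def)
  have qs_fst: "map fst qs = map (\<lambda>l. n + 1 + l) (map fst ps)" unfolding qs_def by (simp add: case_prod_beta o_def)
  have qs_sorted: "sorted_wrt (<) (map fst qs)" unfolding qs_fst sorted_wrt_map using ps(3)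
    by (simp add: sorted_wrt_map)
  have qs_snd: "set (map snd qs) \<subseteq> A"
  proof
    fix c assume "c \<in> set (map snd qs)"
    then obtain l b where "(l, b) \<in> set ps" "c = f b" unfolding qs_def by auto
    then have "b \<in> set (map snd ps)" by (simp add: rev_image_eqI)
    then have "b \<in> insert None (Some ` A)" using ps(4) by blast
    then show "c \<in> A" using \<open>c = f b\<close> a unfolding f_def by auto
  qed
  have qs_ne: "qs \<noteq> []" using ps(2) unfolding qs_def by simp
  have qs_ge: "\<forall>l\<in>set (map fst qs). n < l" unfolding qs_fst by auto
  have zE: "z \<in> E" using cw cspanI[OF qs_ne qs_sorted _ qs_snd, of UNIV w] zq by auto
  have zu: "z \<in> cspan A u UNIV"
    using cspanI[of "[(0, a)]" UNIV A u] a unfolding z_def by simp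
  have zs: "z \<in> shiftset A E (cspan A w {0..n})"
    unfolding shiftset_def
  proof (intro CollectI conjI ballI)
    show "z \<in> lists A" using zE EA by blast
  next
    fix g assume "g \<in> cspan A w {0..n}"
    then obtain rs where rs: "g = concat (map (\<lambda>(l, a). csubst (w l) a) rs)" "rs \<noteq> []"
      "sorted_wrt (<) (map fst rs)" "set (map fst rs) \<subseteq> {0..n}" "set (map snd rs) \<subseteq> A"
      unfolding cspan_def by blast
    have "g @ z = concat (map (\<lambda>(l, a). csubst (w l) a) (rs @ qs))" using rs(1) zq by simp
    moreover have "sorted_wrt (<) (map fst (rs @ qs))"
      unfolding map_append sorted_wrt_append using rs(3,4) qs_sorted qs_ge by fastforce
    moreover have "set (map snd (rs @ qs)) \<subseteq> A" using rs(5) qs_snd by auto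
    moreover have "rs @ qs \<noteq> []" using rs(2) by simp
    ultimately have "g @ z \<in> cspan A w UNIV" using cspanI[of "rs @ qs" UNIV A w] by simp
    then show "g @ z \<in> E" using cw by blast
  qed
  show "(E \<inter> shiftset A E (cspan A w {0..n})) \<inter> cspan A u UNIV \<noteq> {}"
    using zE zs zu by blast
qed


definition ev :: "(nat \<Rightarrow> 'a option list) \<Rightarrow> (nat \<times> 'a option) list \<Rightarrow> 'a option list" where
  "ev s ps = concat (map (\<lambda>(l, b). vsubst (s l) b) ps)"

definition ec :: "(nat \<Rightarrow> 'a option list) \<Rightarrow> (nat \<times> 'a option) list \<Rightarrow> 'a list" where
  "ec s ps = concat (map (\<lambda>(l, b). csubst (s l) (the b)) ps)"

lemma ec_append: "ec s (x @ y) = ec s x @ ec s y" unfolding ec_def by simp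

lemma ec_concat: "ec s (concat xss) = concat (map (ec s) xss)"
  by (induction xss) (simp_all add: ec_append, simp add: ec_def)

lemma csubst_ev: "csubst (ev s t) a = ec s (sigma a t)"
  unfolding ev_def ec_def sigma_def csubst_concat
  by (simp add: csubst_vsubst case_prod_beta o_def)

lemma vsubst_set: "set w \<subseteq> insert None (Some ` A) \<Longrightarrow> b \<in> insert None (Some ` A) \<Longrightarrow>
   set (vsubst w b) \<subseteq> insert None (Some ` A)"
  unfolding vsubst_def by (auto split: option.splits)

lemma vsubst_None: "vsubst w None = w"
  unfolding vsubst_def by (induction w) (auto split: option.splits)

lemma ev_var_word:
  assumes s: "var_seq A s" and t: "t \<in> Good A" and tv: "t \<in> Var"
  shows "var_word A (ev s t)"
proof -
  have "set (ev s t) \<subseteq> insert None (Some ` A)"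
  proof
    fix c assume "c \<in> set (ev s t)"
    then obtain l b where lb: "(l, b) \<in> set t" "c \<in> set (vsubst (s l) b)" unfolding ev_def by auto
    have "b \<in> set (map snd t)" using lb(1) by (simp add: rev_image_eqI)
    then have "b \<in> insert None (Some ` A)" using t unfolding Good_def by blast
    moreover have "set (s l) \<subseteq> insert None (Some ` A)" using s unfolding var_seq_def var_word_def by blast
    ultimately show "c \<in> insert None (Some ` A)" using vsubst_set lb(2) by blast
  qed
  moreover have "None \<in> set (ev s t)"
  proof -
    obtain l where l: "(l, None) \<in> set t" using tv unfolding Var_def by auto
    have sl: "None \<in> set (s l)" using s unfolding var_seq_def var_word_def by blast
    have "s l \<in> set (map (\<lambda>(l, b). vsubst (s l) b) t)"
      using rev_image_eqI[OF l, of "s l" "\<lambda>(l, b). vsubst (s l) b"] by (simp add: vsubst_None)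
    then show ?thesis unfolding ev_def using sl by (auto simp del: set_map)
  qed
  ultimately show ?thesis unfolding var_word_def by blast
qed

context wpq begin

lemma key:
  assumes s: "var_seq A s" and K: "K \<in> p"
  shows "var_seq A (\<lambda>n. ev s (tK K n)) \<and> extracted A (\<lambda>n. ev s (tK K n)) s
     \<and> cspan A (\<lambda>n. ev s (tK K n)) UNIV \<subseteq> ec s ` K"
proof (intro conjI)
  show "var_seq A (\<lambda>n. ev s (tK K n))" unfolding var_seq_def
    using ev_var_word[OF s tK_Good[OF K] tK_Var[OF K]] by blast
next
  define m where "m i = (case i of 0 \<Rightarrow> 0 | Suc j \<Rightarrow> Suc (mx (tK K j)))" for i
  have lo: "\<forall>l\<in>set (map fst (tK K i)). m i \<le> l" for i
  proof (cases i)
    case 0 then show ?thesis unfolding m_def by simp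
  next
    case (Suc j)
    then show ?thesis using tK_Above[OF K, of j] unfolding m_def Above_def by (auto simp: Suc_le_eq)
  qed
  have hi: "\<forall>l\<in>set (map fst (tK K i)). l < m (Suc i)" for i
  proof
    fix l assume "l \<in> set (map fst (tK K i))"
    then have "l \<le> mx (tK K i)" by (rule mx_ge)
    then show "l < m (Suc i)" unfolding m_def by simp
  qed
  have ne: "tK K i \<noteq> []" for i using tK_Good[OF K] unfolding Good_def by blast
  have mlt: "m i < m (Suc i)" for i
  proof -
    obtain x where "x \<in> set (map fst (tK K i))" using ne[of i] by (cases "tK K i") auto
    then show ?thesis using lo hi by (meson le_less_trans)
  qed
  have inv: "ev s (tK K i) \<in> vspan A s {m i..<m (Suc i)}" for i
  proof -
    have "set (map fst (tK K i)) \<subseteq> {m i..<m (Suc i)}"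
    proof
      fix l assume "l \<in> set (map fst (tK K i))"
      then have "m i \<le> l" "l < m (Suc i)" using lo[of i] hi[of i] by blast+
      then show "l \<in> {m i..<m (Suc i)}" by simp
    qed
    moreover have "sorted_wrt (<) (map fst (tK K i))" "set (map snd (tK K i)) \<subseteq> insert None (Some ` A)"
      using tK_Good[OF K] unfolding Good_def by auto
    moreover have "None \<in> set (map snd (tK K i))" using tK_Var[OF K] unfolding Var_def by auto
    ultimately show ?thesis unfolding vspan_def ev_def using ne[of i] by blast
  qed
  show "extracted A (\<lambda>n. ev s (tK K n)) s" unfolding extracted_def
    using inv mlt by (intro allI exI[of _ m]) (simp add: m_def)
next
  show "cspan A (\<lambda>n. ev s (tK K n)) UNIV \<subseteq> ec s ` K"
  proof
    fix z assume "z \<in> cspan A (\<lambda>n. ev s (tK K n)) UNIV"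
    then obtain ps where ps: "z = concat (map (\<lambda>(l, a). csubst (ev s (tK K l)) a) ps)" "ps \<noteq> []"
      "sorted_wrt (<) (map fst ps)" "set (map snd ps) \<subseteq> A" unfolding cspan_def by blast
    have "z = ec s (concat (map (\<lambda>(l, a). sigma a (tK K l)) ps))"
      unfolding ps(1) ec_concat map_map
      by (intro arg_cong[where f=concat] map_cong) (auto simp: csubst_ev)
    moreover have "concat (map (\<lambda>(l, a). sigma a (tK K l)) ps) \<in> K"
      using prod_in[OF K ps(2,3,4)] BK_anti[of 0] BK_0 by blast
    ultimately show "z \<in> ec s ` K" by blast
  qed
qed

end

theorem lemma2p10:
  fixes A :: "'a set" and E :: "'a list set" and s :: "nat \<Rightarrow> 'a option list"
  assumes "finite A" and "A \<noteq> {}"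
    and "E \<subseteq> lists A"
    and "var_seq A s"
    and "large A E s"
  shows "\<exists>w. var_seq A w \<and> extracted A w s \<and>
           (\<forall>n. large A (E \<inter> shiftset A E (cspan A w {0..n})) (\<lambda>i. w (n + 1 + i)))"
proof -
  interpret wset A using assms(1,2) by unfold_locales
  obtain p q where pq: "p \<in> clo {Const}" "mult p p = p" "q \<in> clo {Var}" "\<forall>a\<in>A. sig a q = p"
    using exists_pq by blast
  interpret wpq A p q using pq by unfold_locales auto
  define Kin where "Kin = {x. ec s x \<in> E}"
  have pu: "ultra p" by (rule p_ultra)
  show ?thesis
  proof (cases "Kin \<in> p")
    case True
    define w where "w = (\<lambda>n. ev s (tK Kin n))"
    have k: "var_seq A w" "extracted A w s" "cspan A w UNIV \<subseteq> ec s ` Kin"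
      using key[OF assms(4) True] unfolding w_def by auto
    have cw: "cspan A w UNIV \<subseteq> E" using k(3) unfolding Kin_def by blast
    show ?thesis using k(1,2) words_large[OF assms(2,3) cw] by blast
  next
    case False
    then have nK: "- Kin \<in> p" using ultra_dich[OF pu] by blast
    define w where "w = (\<lambda>n. ev s (tK (- Kin) n))"
    have k: "var_seq A w" "extracted A w s" "cspan A w UNIV \<subseteq> ec s ` (- Kin)"
      using key[OF assms(4) nK] unfolding w_def by auto
    have "E \<inter> cspan A w UNIV \<noteq> {}" using assms(5) k(1,2) unfolding large_def by blast
    moreover have "E \<inter> cspan A w UNIV = {}" using k(3) unfolding Kin_def by blast
    ultimately show ?thesis by blast
  qed
qed


end
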